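(* Let $\mathbf Y=\mathcal X\boldsymbol\beta+\boldsymbol\epsilon$, where $\boldsymbol\beta\in\mathbb R^d$, $\mathcal X\in\mathbb R^{m\times d}$ with $\mathcal X^\intercal\mathcal X$ nonsingular, and $\boldsymbol\epsilon\sim\mathcal N(\mathbf 0,\sigma^2\mathcal I)$ with $\mathcal I$ the $m\times m$ identity. Let $\mathbf Y_1,\mathbf Y_2,\dots$ be independent samples of $\mathbf Y$, and let $T$ be a random variable independent of $\sum_{\ell=1}^n\mathbf Y_\ell$ and of $\{\mathbf Y_\ell:\ell\ge n+1\}$. Suppose $N\ge n$ is an integer-valued function of $T$ and no other random variables, and let $\widehat{\boldsymbol\beta}=N^{-1}(\mathcal X^\intercal\mathcal X)^{-1}\mathcal X^\intercal\sum_{\ell=1}^N\mathbf Y_\ell$. Then for any $\mathbf x\in\mathbb R^d$: (i) conditionally on $T$, $\mathbf x^\intercal\widehat{\boldsymbol\beta}\sim\mathcal N\big(\mathbf x^\intercal\boldsymbol\beta,\frac{\sigma^2}{N}\mathbf x^\intercal(\mathcal X^\intercal\mathcal X)^{-1}\mathbf x\big)$; (ii) $\frac{\sqrt N(\mathbf x^\intercal\widehat{\boldsymbol\beta}-\mathbf x^\intercal\boldsymbol\beta)}{\sigma\sqrt{\mathbf x^\intercal(\mathcal X^\intercal\mathcal X)^{-1}\mathbf x}}$ is independent of $T$ and has the standard normal distribution. *)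

theory Defs
  imports "HOL-Probability.Probability"
begin

definition betahat ::
  "real^'d^'m \<Rightarrow> (nat \<Rightarrow> 'a \<Rightarrow> real^'m) \<Rightarrow> nat \<Rightarrow> 'a \<Rightarrow> real^'d" where
  "betahat X Y N \<omega> =
     (1 / real N) *\<^sub>R ((matrix_inv (transpose X ** X) ** transpose X) *v (\<Sum>l\<in>{1..N}. Y l \<omega>))"

text \<open>The Gaussian measure N(mu, s^2) on the real line (s = standard deviation).\<close>
definition normal_measure :: "real \<Rightarrow> real \<Rightarrow> real measure" where
  "normal_measure mu s = density lborel (normal_density mu s)"

text \<open>Independence of two random variables with possibly different codomain types
  (the library's indep_var forces a common codomain type); this is literally the
  characterisation indep_var_eq of the library, i.e. independence of the generated
  sigma-algebras.\<close>
definition indep_rv :: "'a measure \<Rightarrow> 'b measure \<Rightarrow> ('a \<Rightarrow> 'b) \<Rightarrow> 'c measure \<Rightarrow> ('a \<Rightarrow> 'c) \<Rightarrow> bool" where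
  "indep_rv M S X T Y \<longleftrightarrow>
     X \<in> measurable M S \<and> Y \<in> measurable M T \<and>
     prob_space.indep_set M
       (sigma_sets (space M) {X -` A \<inter> space M | A. A \<in> sets S})
       (sigma_sets (space M) {Y -` A \<inter> space M | A. A \<in> sets T})"

end

theory Submission
  imports Defs
begin


lemma linalg:
  fixes X :: "real^'d^'m" and x :: "real^'d"
  assumes inv: "invertible (transpose X ** X)"
  shows "x \<bullet> ((matrix_inv (transpose X ** X) ** transpose X) *v v) = (x v* (matrix_inv (transpose X ** X) ** transpose X)) \<bullet> v"
    and "(matrix_inv (transpose X ** X) ** transpose X) *v (X *v b) = b"
    and "(x v* (matrix_inv (transpose X ** X) ** transpose X)) \<bullet> (x v* (matrix_inv (transpose X ** X) ** transpose X)) = x \<bullet> (matrix_inv (transpose X ** X) *v x)"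
    and "x \<noteq> 0 \<Longrightarrow> x \<bullet> (matrix_inv (transpose X ** X) *v x) > 0"
proof -
  define S where "S = transpose X ** X"
  define C where "C = matrix_inv S"
  have SC: "S ** C = mat 1 \<and> C ** S = mat 1"
    using inv unfolding C_def S_def matrix_inv_def invertible_def by (rule someI_ex)
  have St: "transpose S = S" unfolding S_def by (simp add: matrix_transpose_mul)
  have "transpose (S ** C) = mat 1" using SC by simp
  hence CtS: "transpose C ** S = mat 1" using St by (simp add: matrix_transpose_mul)
  have Ct: "transpose C = C"
  proof -
    have "transpose C = transpose C ** (S ** C)" using SC by simp
    also have "\<dots> = (transpose C ** S) ** C" by (simp add: matrix_mul_assoc)
    also have "\<dots> = C" using CtS by simp
    finally show ?thesis .
  qed
  show "x \<bullet> ((matrix_inv (transpose X ** X) ** transpose X) *v v) = (x v* (matrix_inv (transpose X ** X) ** transpose X)) \<bullet> v"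
    by (simp add: dot_lmul_matrix)
  show "(matrix_inv (transpose X ** X) ** transpose X) *v (X *v b) = b"
    using SC unfolding C_def S_def by (simp add: matrix_vector_mul_assoc matrix_mul_assoc)
  have a_eq: "x v* (C ** transpose X) = X *v (C *v x)"
  proof -
    have "x v* (C ** transpose X) = transpose (C ** transpose X) *v x" by simp
    also have "\<dots> = (X ** transpose C) *v x" by (simp add: matrix_transpose_mul)
    finally show ?thesis using Ct by (simp add: matrix_vector_mul_assoc)
  qed
  have AAt: "(C ** transpose X) ** transpose (C ** transpose X) = C"
  proof -
    have "(C ** transpose X) ** transpose (C ** transpose X) = C ** (transpose X ** X) ** transpose C"
      by (simp add: matrix_transpose_mul matrix_mul_assoc)
    also have "\<dots> = transpose C" using SC unfolding S_def by simp
    finally show ?thesis using Ct by simp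
  qed
  have "(x v* (C ** transpose X)) \<bullet> (x v* (C ** transpose X)) = x \<bullet> ((C ** transpose X) *v (transpose (C ** transpose X) *v x))"
    by (simp add: dot_lmul_matrix)
  also have "\<dots> = x \<bullet> (C *v x)" by (simp only: matrix_vector_mul_assoc AAt)
  finally show aa: "(x v* (matrix_inv (transpose X ** X) ** transpose X)) \<bullet> (x v* (matrix_inv (transpose X ** X) ** transpose X)) = x \<bullet> (matrix_inv (transpose X ** X) *v x)"
    unfolding C_def S_def .
  assume "x \<noteq> 0"
  have "X *v (C *v x) \<noteq> 0"
  proof
    assume h: "X *v (C *v x) = 0"
    have "x = (S ** C) *v x" using SC by simp
    also have "\<dots> = transpose X *v (X *v (C *v x))" unfolding S_def by (simp add: matrix_vector_mul_assoc matrix_mul_assoc)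
    also have "\<dots> = 0" using h by simp
    finally show False using \<open>x \<noteq> 0\<close> by simp
  qed
  hence "(x v* (C ** transpose X)) \<bullet> (x v* (C ** transpose X)) > 0" using a_eq by simp
  thus "x \<bullet> (matrix_inv (transpose X ** X) *v x) > 0" using aa unfolding C_def S_def by simp
qed



lemma key_sum:
  assumes P: "prob_space M" and Tm: "T \<in> measurable M ST" and Wm: "W \<in> measurable M MW"
  and ind: "prob_space.indep_set M (sigma_sets (space M) {T -` A \<inter> space M | A. A \<in> sets ST}) (sigma_sets (space M) {W -` A \<inter> space M | A. A \<in> sets MW})"
  and gm: "g \<in> measurable ST (count_space UNIV)"
  and Gm: "\<And>k. G k \<in> borel_measurable MW"
  and A: "A \<in> sets ST" and B: "B \<in> sets borel"
  shows "(\<lambda>k. measure M {\<omega>\<in>space M. T \<omega> \<in> A \<and> g (T \<omega>) = (k::nat)} * measure M {\<omega>\<in>space M. G k (W \<omega>) \<in> B})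
     sums measure M {\<omega>\<in>space M. T \<omega> \<in> A \<and> G (g (T \<omega>)) (W \<omega>) \<in> B}"
proof -
  interpret prob_space M by (rule P)
  define E where "E k = {\<omega>\<in>space M. T \<omega> \<in> A \<and> g (T \<omega>) = k \<and> G k (W \<omega>) \<in> B}" for k
  have Ak: "A \<inter> g -` {k} \<inter> space ST \<in> sets ST" for k
  proof -
    have "g -` {k} \<inter> space ST \<in> sets ST" using gm by (auto simp: measurable_def)
    hence "A \<inter> (g -` {k} \<inter> space ST) \<in> sets ST" using A by auto
    thus ?thesis by (simp add: Int_assoc)
  qed
  have Bk: "G k -` B \<inter> space MW \<in> sets MW" for k
    using Gm B by (auto simp: measurable_def)
  have Eeq: "E k = (T -` (A \<inter> g -` {k} \<inter> space ST) \<inter> space M) \<inter> (W -` (G k -` B \<inter> space MW) \<inter> space M)" for k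
    using measurable_space[OF Tm] measurable_space[OF Wm] unfolding E_def by auto
  have a1: "T -` (A \<inter> g -` {k} \<inter> space ST) \<inter> space M \<in> sigma_sets (space M) {T -` A \<inter> space M | A. A \<in> sets ST}" for k
    by (rule sigma_sets.Basic) (use Ak in blast)
  have b1: "W -` (G k -` B \<inter> space MW) \<inter> space M \<in> sigma_sets (space M) {W -` A \<inter> space M | A. A \<in> sets MW}" for k
    by (rule sigma_sets.Basic) (use Bk in blast)
  have pr: "prob (E k) = prob {\<omega>\<in>space M. T \<omega> \<in> A \<and> g (T \<omega>) = k} * prob {\<omega>\<in>space M. G k (W \<omega>) \<in> B}" for k
  proof -
    have "prob (E k) = prob (T -` (A \<inter> g -` {k} \<inter> space ST) \<inter> space M) * prob (W -` (G k -` B \<inter> space MW) \<inter> space M)"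
      unfolding Eeq by (rule indep_setD[OF ind a1 b1])
    moreover have "T -` (A \<inter> g -` {k} \<inter> space ST) \<inter> space M = {\<omega>\<in>space M. T \<omega> \<in> A \<and> g (T \<omega>) = k}"
      using measurable_space[OF Tm] by auto
    moreover have "W -` (G k -` B \<inter> space MW) \<inter> space M = {\<omega>\<in>space M. G k (W \<omega>) \<in> B}"
      using measurable_space[OF Wm] by auto
    ultimately show ?thesis by simp
  qed
  have ev: "range E \<subseteq> events"
  proof
    fix e assume "e \<in> range E" then obtain k where "e = E k" by auto
    thus "e \<in> events" unfolding Eeq
      using measurable_sets[OF Tm Ak] measurable_sets[OF Wm Bk] by auto
  qed
  have dj: "disjoint_family E" unfolding disjoint_family_on_def E_def by auto
  have un: "(\<Union>k. E k) = {\<omega>\<in>space M. T \<omega> \<in> A \<and> G (g (T \<omega>)) (W \<omega>) \<in> B}"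
    unfolding E_def by auto
  show ?thesis using finite_measure_UNION[OF ev dj] unfolding un pr .
qed

lemma key_int:
  assumes P: "prob_space M" and Tm: "T \<in> measurable M ST"
  and gm: "g \<in> measurable ST (count_space UNIV)"
  and A: "A \<in> sets ST" and c: "\<And>k. \<bar>c k\<bar> \<le> (1::real)"
  shows "(\<lambda>k. measure M {\<omega>\<in>space M. T \<omega> \<in> A \<and> g (T \<omega>) = (k::nat)} * c k)
     sums (\<integral>\<omega>. indicator A (T \<omega>) * c (g (T \<omega>)) \<partial>M)"
proof -
  interpret prob_space M by (rule P)
  define E where "E k = {\<omega>\<in>space M. T \<omega> \<in> A \<and> g (T \<omega>) = k}" for k
  have Ak: "A \<inter> g -` {k} \<inter> space ST \<in> sets ST" for k
  proof -
    have "g -` {k} \<inter> space ST \<in> sets ST" using gm by (auto simp: measurable_def)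
    hence "A \<inter> (g -` {k} \<inter> space ST) \<in> sets ST" using A by auto
    thus ?thesis by (simp add: Int_assoc)
  qed
  have Eeq: "E k = T -` (A \<inter> g -` {k} \<inter> space ST) \<inter> space M" for k
    using measurable_space[OF Tm] unfolding E_def by auto
  have Eev: "E k \<in> events" for k unfolding Eeq using measurable_sets[OF Tm Ak] .
  have dj: "disjoint_family E" unfolding disjoint_family_on_def E_def by auto
  have summ: "summable (\<lambda>k. prob (E k))"
    using finite_measure_UNION[of E] Eev dj by (auto simp: sums_iff)
  define f where "f k \<omega> = indicator (E k) \<omega> * c k" for k \<omega>
  have fi: "integrable M (f k)" for k
    unfolding f_def using Eev by (intro integrable_mult_left) (rule integrable_real_indicator, simp, simp add: emeasure_eq_measure)
  have intf: "integral\<^sup>L M (f k) = prob (E k) * c k" for k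
    unfolding f_def using Eev by simp
  have nf: "(\<integral>x. norm (f k x) \<partial>M) \<le> prob (E k)" for k
  proof -
    have "(\<integral>x. norm (f k x) \<partial>M) = prob (E k) * \<bar>c k\<bar>"
      unfolding f_def using Eev by (simp add: abs_mult)
    also have "\<dots> \<le> prob (E k) * 1" using c by (intro mult_left_mono) auto
    finally show ?thesis by simp
  qed
  have summ2: "summable (\<lambda>k. \<integral>x. norm (f k x) \<partial>M)"
    by (rule summable_comparison_test[OF _ summ]) (use nf in auto)
  have fsing: "f k \<omega> = (if k = g (T \<omega>) then indicator A (T \<omega>) * c (g (T \<omega>)) else 0)" if "\<omega> \<in> space M" for k \<omega>
    unfolding f_def E_def using that by (auto simp: indicator_def)
  have AEs: "AE x in M. summable (\<lambda>k. norm (f k x))"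
  proof (rule AE_I2)
    fix x assume x: "x \<in> space M"
    have "(\<lambda>k. norm (f k x)) = (\<lambda>k. if k = g (T x) then norm (indicator A (T x) * c (g (T x)) :: real) else 0)"
      using fsing[OF x] by (intro ext) simp
    thus "summable (\<lambda>k. norm (f k x))" by (simp only: sums_summable[OF sums_single])
  qed
  have S: "(\<lambda>k. integral\<^sup>L M (f k)) sums (\<integral>x. (\<Sum>k. f k x) \<partial>M)"
    by (rule sums_integral[OF fi AEs summ2])
  have pt: "(\<Sum>k. f k \<omega>) = indicator A (T \<omega>) * c (g (T \<omega>))" if "\<omega> \<in> space M" for \<omega>
  proof -
    have "f k \<omega> = (if k = g (T \<omega>) then indicator A (T \<omega>) * c (g (T \<omega>)) else 0)" for k
      unfolding f_def E_def using that by (auto simp: indicator_def)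
    hence "(\<lambda>k. f k \<omega>) = (\<lambda>k. if k = g (T \<omega>) then indicator A (T \<omega>) * c (g (T \<omega>)) else 0)" by auto
    thus ?thesis using sums_single[of "g (T \<omega>)" "\<lambda>_. indicator A (T \<omega>) * c (g (T \<omega>))"]
      by (simp add: sums_iff)
  qed
  have "(\<integral>x. (\<Sum>k. f k x) \<partial>M) = (\<integral>\<omega>. indicator A (T \<omega>) * c (g (T \<omega>)) \<partial>M)"
    by (rule Bochner_Integration.integral_cong) (auto simp: pt)
  thus ?thesis using S unfolding intf E_def by simp
qed



lemma dist_one:
  fixes Y :: "'a \<Rightarrow> real^'m" and a \<mu> :: "real^'m"
  assumes P: "prob_space M" and sp: "\<sigma> > 0" and anz: "a \<noteq> 0"
    and ind: "prob_space.indep_vars M (\<lambda>_. borel) (\<lambda>i \<omega>. Y \<omega> $ i) UNIV"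
    and nrm: "\<And>i. distributed M lborel (\<lambda>\<omega>. Y \<omega> $ i) (normal_density (\<mu> $ i) \<sigma>)"
  shows "distributed M lborel (\<lambda>\<omega>. a \<bullet> Y \<omega>) (normal_density (a \<bullet> \<mu>) (\<sigma> * sqrt (a \<bullet> a)))"
proof -
  interpret prob_space M by (rule P)
  define I where "I = {i. a $ i \<noteq> 0}"
  have fI: "finite I" unfolding I_def by simp
  have neI: "I \<noteq> {}" using anz unfolding I_def by (auto simp: vec_eq_iff)
  have indI: "indep_vars (\<lambda>_. borel) (\<lambda>i \<omega>. a $ i * Y \<omega> $ i) I"
    using indep_vars_compose2[OF indep_vars_subset[OF ind, of I], of "\<lambda>i v. a $ i * v" "\<lambda>_. borel"]
    by simp
  have ni: "distributed M lborel (\<lambda>\<omega>. a $ i * Y \<omega> $ i) (normal_density (a $ i * \<mu> $ i) (\<bar>a $ i\<bar> * \<sigma>))"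
    if "i \<in> I" for i
    using normal_density_affine[OF nrm[of i] sp, of "a $ i" 0] that unfolding I_def by simp
  have pos: "0 < \<bar>a $ i\<bar> * \<sigma>" if "i \<in> I" for i using that sp unfolding I_def by simp
  have S: "distributed M lborel (\<lambda>\<omega>. \<Sum>i\<in>I. a $ i * Y \<omega> $ i)
      (normal_density (\<Sum>i\<in>I. a $ i * \<mu> $ i) (sqrt (\<Sum>i\<in>I. (\<bar>a $ i\<bar> * \<sigma>)\<^sup>2)))"
    by (rule sum_indep_normal[OF fI neI indI pos ni])
  have e1: "(\<Sum>i\<in>I. a $ i * v $ i) = a \<bullet> v" for v :: "real^'m"
  proof -
    have "a \<bullet> v = (\<Sum>i\<in>UNIV. a $ i * v $ i)" by (simp add: inner_vec_def)
    also have "\<dots> = (\<Sum>i\<in>I. a $ i * v $ i)"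
      by (rule sum.mono_neutral_right) (auto simp: I_def)
    finally show ?thesis by simp
  qed
  have e2: "sqrt (\<Sum>i\<in>I. (\<bar>a $ i\<bar> * \<sigma>)\<^sup>2) = \<sigma> * sqrt (a \<bullet> a)"
  proof -
    have "(\<Sum>i\<in>I. (\<bar>a $ i\<bar> * \<sigma>)\<^sup>2) = \<sigma>\<^sup>2 * (\<Sum>i\<in>I. a $ i * a $ i)"
      by (simp add: sum_distrib_left power_mult_distrib power2_eq_square mult_ac)
    also have "\<dots> = \<sigma>\<^sup>2 * (a \<bullet> a)" using e1 by simp
    finally show ?thesis using sp by (simp add: real_sqrt_mult)
  qed
  show ?thesis using S unfolding e1 e2 .
qed

lemma dist_sum:
  fixes Y :: "nat \<Rightarrow> 'a \<Rightarrow> real^'m" and a \<mu> :: "real^'m"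
  assumes P: "prob_space M" and sp: "\<sigma> > 0" and anz: "a \<noteq> 0" and k: "k \<ge> 1"
    and Yind: "prob_space.indep_vars M (\<lambda>_. borel) Y {1..}"
    and ind: "\<And>l. l \<ge> 1 \<Longrightarrow> prob_space.indep_vars M (\<lambda>_. borel) (\<lambda>i \<omega>. Y l \<omega> $ i) UNIV"
    and nrm: "\<And>l i. l \<ge> 1 \<Longrightarrow> distributed M lborel (\<lambda>\<omega>. Y l \<omega> $ i) (normal_density (\<mu> $ i) \<sigma>)"
  shows "distributed M lborel (\<lambda>\<omega>. \<Sum>l\<in>{1..k}. a \<bullet> Y l \<omega>)
           (normal_density (real k * (a \<bullet> \<mu>)) (sqrt (real k * \<sigma>\<^sup>2 * (a \<bullet> a))))"
proof -
  interpret prob_space M by (rule P)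
  have aa: "a \<bullet> a > 0" using anz by simp
  have indK: "indep_vars (\<lambda>_. borel) (\<lambda>l \<omega>. a \<bullet> Y l \<omega>) {1..k}"
    using indep_vars_compose2[OF indep_vars_subset[OF Yind, of "{1..k}"], of "\<lambda>_ v. a \<bullet> v" "\<lambda>_. borel"]
    by auto
  have S: "distributed M lborel (\<lambda>\<omega>. \<Sum>l\<in>{1..k}. a \<bullet> Y l \<omega>)
     (normal_density (\<Sum>l\<in>{1..k}. a \<bullet> \<mu>) (sqrt (\<Sum>l\<in>{1..k}. (\<sigma> * sqrt (a \<bullet> a))\<^sup>2)))"
    by (rule sum_indep_normal[OF _ _ indK]) (use k sp aa dist_one[OF P sp anz ind nrm] in auto)
  have "(\<Sum>l\<in>{1..k}. (\<sigma> * sqrt (a \<bullet> a))\<^sup>2) = real k * \<sigma>\<^sup>2 * (a \<bullet> a)"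
    using aa by (simp add: power_mult_distrib)
  moreover have "(\<Sum>l\<in>{1..k}. a \<bullet> \<mu>) = real k * (a \<bullet> \<mu>)" by simp
  ultimately show ?thesis using S by metis
qed



lemma dmeas:
  assumes "distributed M lborel Z (normal_density m s)" and "B \<in> sets borel"
  shows "measure M {\<omega>\<in>space M. Z \<omega> \<in> B} = measure (normal_measure m s) B"
proof -
  have d: "distr M lborel Z = density lborel (normal_density m s)" and Zm: "Z \<in> measurable M lborel"
    using assms(1) unfolding distributed_def by auto
  have "measure (normal_measure m s) B = measure (distr M lborel Z) B"
    unfolding normal_measure_def d ..
  also have "\<dots> = measure M (Z -` B \<inter> space M)"
    using assms(2) Zm by (subst measure_distr) auto
  also have "Z -` B \<inter> space M = {\<omega>\<in>space M. Z \<omega> \<in> B}" by auto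
  finally show ?thesis by simp
qed

lemma Int_stable_vimage: "Int_stable {X -` A \<inter> space M | A. A \<in> sets S}"
  unfolding Int_stable_def
proof clarify
  fix A B assume "A \<in> sets S" "B \<in> sets S"
  thus "\<exists>C. X -` A \<inter> space M \<inter> (X -` B \<inter> space M) = X -` C \<inter> space M \<and> C \<in> sets S"
    by (intro exI[of _ "A \<inter> B"]) auto
qed

lemma sum_split:
  fixes Y :: "nat \<Rightarrow> real^'m"
  assumes "k \<ge> n" "n \<ge> 1"
  shows "(\<Sum>l\<in>{1..k}. Y l) = (\<Sum>l\<in>{1..n}. Y l) + (\<Sum>j\<in>{1..k-n}. Y (n + j))"
proof -
  have "(\<Sum>l\<in>{1..n + (k-n)}. Y l) = (\<Sum>l\<in>{1..n}. Y l) + (\<Sum>l\<in>{n+1..n + (k-n)}. Y l)"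
    using assms by (intro sum.ub_add_nat) auto
  also have "(\<Sum>l\<in>{n+1..n + (k-n)}. Y l) = (\<Sum>j\<in>{1..k-n}. Y (n + j))"
    using sum.shift_bounds_cl_nat_ivl[of Y 1 n "k-n"] by (simp add: add.commute)
  finally show ?thesis using assms by simp
qed




theorem lemma1:
  fixes M :: "'a measure"
    and X :: "real^'d^'m" and \<beta> :: "real^'d" and \<sigma> :: real
    and Y :: "nat \<Rightarrow> 'a \<Rightarrow> real^'m"
    and ST :: "'t measure" and T :: "'a \<Rightarrow> 't"
    and g :: "'t \<Rightarrow> nat" and n :: nat and x :: "real^'d"
  assumes P: "prob_space M"
    and nonsing: "invertible (transpose X ** X)"
    and sigma_pos: "\<sigma> > 0"
    and n_pos: "n \<ge> 1"
    and Y_indep: "prob_space.indep_vars M (\<lambda>_. borel) Y {1..}"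
    and Y_comp_indep: "\<And>l. l \<ge> 1 \<Longrightarrow> prob_space.indep_vars M (\<lambda>_. borel) (\<lambda>i \<omega>. Y l \<omega> $ i) UNIV"
    and Y_comp_normal: "\<And>l i. l \<ge> 1 \<Longrightarrow>
          distributed M lborel (\<lambda>\<omega>. Y l \<omega> $ i) (normal_density ((X *v \<beta>) $ i) \<sigma>)"
    and T_indep: "indep_rv M ST T (PiM UNIV (\<lambda>_::nat. borel :: (real^'m) measure))
          (\<lambda>\<omega> k. if k = 0 then (\<Sum>l\<in>{1..n}. Y l \<omega>) else Y (n + k) \<omega>)"
    and g_meas: "g \<in> measurable ST (count_space UNIV)"
    and N_ge: "\<And>\<omega>. \<omega> \<in> space M \<Longrightarrow> g (T \<omega>) \<ge> n"
    and x_nz: "x \<noteq> 0"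
  shows
    "(\<forall>A \<in> sets ST. \<forall>B \<in> sets (borel :: real measure).
        measure M {\<omega> \<in> space M. T \<omega> \<in> A \<and> x \<bullet> betahat X Y (g (T \<omega>)) \<omega> \<in> B}
        = (\<integral>\<omega>. indicator A (T \<omega>) *
              measure (normal_measure (x \<bullet> \<beta>)
                 (sqrt (\<sigma>\<^sup>2 / real (g (T \<omega>)) * (x \<bullet> (matrix_inv (transpose X ** X) *v x))))) B
           \<partial>M))
     \<and> indep_rv M borel
         (\<lambda>\<omega>. sqrt (real (g (T \<omega>))) * (x \<bullet> betahat X Y (g (T \<omega>)) \<omega> - x \<bullet> \<beta>)
               / (\<sigma> * sqrt (x \<bullet> (matrix_inv (transpose X ** X) *v x)))) ST T
     \<and> distributed M lborel
         (\<lambda>\<omega>. sqrt (real (g (T \<omega>))) * (x \<bullet> betahat X Y (g (T \<omega>)) \<omega> - x \<bullet> \<beta>)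
               / (\<sigma> * sqrt (x \<bullet> (matrix_inv (transpose X ** X) *v x))))
         std_normal_density"
proof -
  interpret prob_space M by (rule P)
  define Am where "Am = matrix_inv (transpose X ** X) ** transpose X"
  define a where "a = x v* Am"
  define q where "q = x \<bullet> (matrix_inv (transpose X ** X) *v x)"
  define \<mu> where "\<mu> = X *v \<beta>"
  have inA: "x \<bullet> (Am *v v) = a \<bullet> v" for v
    unfolding Am_def a_def by (rule linalg(1)[OF nonsing])
  have Amu: "Am *v \<mu> = \<beta>" unfolding Am_def \<mu>_def by (rule linalg(2)[OF nonsing])
  have aa: "a \<bullet> a = q" unfolding a_def Am_def q_def by (rule linalg(3)[OF nonsing])
  have qpos: "q > 0" unfolding q_def by (rule linalg(4)[OF nonsing x_nz])
  have anz: "a \<noteq> 0" using aa qpos by auto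
  have amu: "a \<bullet> \<mu> = x \<bullet> \<beta>" using inA[of \<mu>] Amu by simp
  define W where "W = (\<lambda>\<omega> k. if k = 0 then (\<Sum>l\<in>{1..n}. Y l \<omega>) else Y (n + k) \<omega>)"
  define MW where "MW = (PiM UNIV (\<lambda>_::nat. borel :: (real^'m) measure))"
  have Tm: "T \<in> measurable M ST" and Wm: "W \<in> measurable M MW"
    and ind: "indep_set (sigma_sets (space M) {T -` A \<inter> space M | A. A \<in> sets ST})
                 (sigma_sets (space M) {W -` A \<inter> space M | A. A \<in> sets MW})"
    using T_indep unfolding indep_rv_def W_def MW_def by auto
  have gTm: "(\<lambda>\<omega>. g (T \<omega>)) \<in> measurable M (count_space UNIV)"
    using measurable_comp[OF Tm g_meas] by (simp add: comp_def)
  define G where "G k w = (1 / real k) * (a \<bullet> (w 0 + (\<Sum>j\<in>{1..k-n}. w j)))" for k and w :: "nat \<Rightarrow> real^'m"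
  have Gm: "G k \<in> borel_measurable MW" for k
    unfolding G_def MW_def by measurable
  have GW: "G k (W \<omega>) = x \<bullet> betahat X Y k \<omega>" if "k \<ge> n" for k \<omega>
  proof -
    have "(\<Sum>l\<in>{1..k}. Y l \<omega>) = W \<omega> 0 + (\<Sum>j\<in>{1..k-n}. W \<omega> j)"
      unfolding W_def using sum_split[OF that n_pos, of "\<lambda>l. Y l \<omega>"] by simp
    thus ?thesis unfolding G_def betahat_def Am_def[symmetric]
      by (simp add: inA)
  qed
  have dk: "distributed M lborel (\<lambda>\<omega>. G k (W \<omega>)) (normal_density (x \<bullet> \<beta>) (sqrt (\<sigma>\<^sup>2 / real k * q)))"
    if kn: "k \<ge> n" for k
  proof -
    have k1: "k \<ge> 1" using kn n_pos by simp
    have ds: "distributed M lborel (\<lambda>\<omega>. \<Sum>l\<in>{1..k}. a \<bullet> Y l \<omega>)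
           (normal_density (real k * (a \<bullet> \<mu>)) (sqrt (real k * \<sigma>\<^sup>2 * (a \<bullet> a))))"
      unfolding \<mu>_def by (rule dist_sum[OF P sigma_pos anz k1 Y_indep Y_comp_indep Y_comp_normal])
    have sp: "0 < sqrt (real k * \<sigma>\<^sup>2 * (a \<bullet> a))" using k1 sigma_pos aa qpos by simp
    note d2 = normal_density_affine[OF ds sp, of "1 / real k" 0]
    have e1: "(\<lambda>\<omega>. 0 + 1 / real k * (\<Sum>l\<in>{1..k}. a \<bullet> Y l \<omega>)) = (\<lambda>\<omega>. G k (W \<omega>))"
    proof
      fix \<omega>
      show "0 + 1 / real k * (\<Sum>l\<in>{1..k}. a \<bullet> Y l \<omega>) = G k (W \<omega>)"
        unfolding GW[OF kn] betahat_def Am_def[symmetric]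
        by (simp add: inA inner_sum_right)
    qed
    have e2: "0 + 1 / real k * (real k * (a \<bullet> \<mu>)) = x \<bullet> \<beta>" using k1 amu by simp
    have e3: "\<bar>1 / real k\<bar> * sqrt (real k * \<sigma>\<^sup>2 * (a \<bullet> a)) = sqrt (\<sigma>\<^sup>2 / real k * q)"
    proof -
      have "\<bar>1 / real k\<bar> * sqrt (real k * \<sigma>\<^sup>2 * (a \<bullet> a)) = sqrt (real k * \<sigma>\<^sup>2 * q) / sqrt ((real k)\<^sup>2)"
        using k1 aa by simp
      also have "\<dots> = sqrt (real k * \<sigma>\<^sup>2 * q / (real k)\<^sup>2)" by (rule real_sqrt_divide[symmetric])
      also have "real k * \<sigma>\<^sup>2 * q / (real k)\<^sup>2 = \<sigma>\<^sup>2 / real k * q"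
        using k1 by (simp add: power2_eq_square field_simps)
      finally show ?thesis .
    qed
    show ?thesis using d2 unfolding e1 e2 e3 using k1 by simp
  qed
  define G' where "G' k w = sqrt (real k) * (G k w - x \<bullet> \<beta>) / (\<sigma> * sqrt q)" for k w
  have G'm: "G' k \<in> borel_measurable MW" for k
    unfolding G'_def using Gm[of k] by measurable
  have dk': "distributed M lborel (\<lambda>\<omega>. G' k (W \<omega>)) std_normal_density" if kn: "k \<ge> n" for k
  proof -
    have k1: "k \<ge> 1" using kn n_pos by simp
    have sp: "0 < sqrt (\<sigma>\<^sup>2 / real k * q)" using k1 sigma_pos qpos by simp
    note c = normal_standard_normal_convert[OF sp]
    have sq: "sqrt (\<sigma>\<^sup>2 / real k * q) = \<sigma> * sqrt q / sqrt (real k)"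
      using sigma_pos by (simp add: real_sqrt_mult real_sqrt_divide)
    have e: "(\<lambda>\<omega>. (G k (W \<omega>) - x \<bullet> \<beta>) / sqrt (\<sigma>\<^sup>2 / real k * q)) = (\<lambda>\<omega>. G' k (W \<omega>))"
      unfolding sq G'_def using k1 sigma_pos qpos by (intro ext) (simp add: field_simps)
    show ?thesis using dk[OF kn] c e by simp
  qed
  have Ek0: "measure M {\<omega>\<in>space M. T \<omega> \<in> A \<and> g (T \<omega>) = k} = 0" if "\<not> k \<ge> n" for A k
  proof -
    have "{\<omega>\<in>space M. T \<omega> \<in> A \<and> g (T \<omega>) = k} = {}" using N_ge that by auto
    thus ?thesis by (metis measure_empty)
  qed
  have part1: "measure M {\<omega> \<in> space M. T \<omega> \<in> A \<and> x \<bullet> betahat X Y (g (T \<omega>)) \<omega> \<in> B}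
        = (\<integral>\<omega>. indicator A (T \<omega>) *
              measure (normal_measure (x \<bullet> \<beta>) (sqrt (\<sigma>\<^sup>2 / real (g (T \<omega>)) * q))) B \<partial>M)"
    if A: "A \<in> sets ST" and B: "B \<in> sets (borel :: real measure)" for A B
  proof -
    define c where "c k = (if k \<ge> n then measure (normal_measure (x \<bullet> \<beta>) (sqrt (\<sigma>\<^sup>2 / real k * q))) B else 0)" for k
    have cb: "\<bar>c k\<bar> \<le> 1" for k
    proof (cases "k \<ge> n")
      case True
      have "0 < \<sigma>\<^sup>2 / real k * q" using True n_pos sigma_pos qpos by simp
      interpret N: prob_space "normal_measure (x \<bullet> \<beta>) (sqrt (\<sigma>\<^sup>2 / real k * q))"
        unfolding normal_measure_def by (rule prob_space_normal_density) (use \<open>0 < \<sigma>\<^sup>2 / real k * q\<close> in simp)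
      show ?thesis unfolding c_def using True N.prob_le_1 by simp
    qed (simp add: c_def)
    note S1 = key_sum[where G=G, OF P Tm Wm ind g_meas Gm A B]
    note S2 = key_int[where c=c, OF P Tm g_meas A cb]
    have teq: "measure M {\<omega>\<in>space M. T \<omega> \<in> A \<and> g (T \<omega>) = k} * measure M {\<omega>\<in>space M. G k (W \<omega>) \<in> B}
       = measure M {\<omega>\<in>space M. T \<omega> \<in> A \<and> g (T \<omega>) = k} * c k" for k
    proof (cases "k \<ge> n")
      case True
      then show ?thesis unfolding c_def using dmeas[OF dk[OF True] B] by simp
    qed (simp add: Ek0)
    have eqm: "measure M {\<omega>\<in>space M. T \<omega> \<in> A \<and> G (g (T \<omega>)) (W \<omega>) \<in> B}
       = (\<integral>\<omega>. indicator A (T \<omega>) * c (g (T \<omega>)) \<partial>M)"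
      using S1 S2 unfolding teq by (rule sums_unique2)
    have "{\<omega> \<in> space M. T \<omega> \<in> A \<and> x \<bullet> betahat X Y (g (T \<omega>)) \<omega> \<in> B}
        = {\<omega>\<in>space M. T \<omega> \<in> A \<and> G (g (T \<omega>)) (W \<omega>) \<in> B}"
      using GW N_ge by auto
    moreover have "(\<integral>\<omega>. indicator A (T \<omega>) * c (g (T \<omega>)) \<partial>M) = (\<integral>\<omega>. indicator A (T \<omega>) *
              measure (normal_measure (x \<bullet> \<beta>) (sqrt (\<sigma>\<^sup>2 / real (g (T \<omega>)) * q))) B \<partial>M)"
      by (rule Bochner_Integration.integral_cong) (auto simp: c_def N_ge)
    ultimately show ?thesis using eqm by simp
  qed
  define Phi where "Phi \<omega> = sqrt (real (g (T \<omega>))) * (x \<bullet> betahat X Y (g (T \<omega>)) \<omega> - x \<bullet> \<beta>) / (\<sigma> * sqrt q)" for \<omega>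
  have PhiEq: "Phi \<omega> = G' (g (T \<omega>)) (W \<omega>)" if "\<omega> \<in> space M" for \<omega>
    unfolding Phi_def G'_def using GW[OF N_ge[OF that]] by simp
  have Phim: "Phi \<in> borel_measurable M"
  proof -
    have "(\<lambda>\<omega>. G' (g (T \<omega>)) (W \<omega>)) \<in> borel_measurable M"
      by (rule measurable_compose_countable'[where f="\<lambda>k \<omega>. G' k (W \<omega>)" and I=UNIV, OF _ gTm])
         (auto intro: measurable_compose[OF Wm G'm])
    thus ?thesis using measurable_cong[of M Phi "\<lambda>\<omega>. G' (g (T \<omega>)) (W \<omega>)" borel] PhiEq by blast
  qed
  define \<nu> where "\<nu> = normal_measure 0 1"
  interpret Nu: prob_space \<nu> unfolding \<nu>_def normal_measure_def by (rule prob_space_normal_density) simp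
  have joint: "measure M {\<omega>\<in>space M. T \<omega> \<in> A \<and> Phi \<omega> \<in> B} = measure \<nu> B * measure M {\<omega>\<in>space M. T \<omega> \<in> A}"
    if A: "A \<in> sets ST" and B: "B \<in> sets (borel :: real measure)" for A B
  proof -
    have cb: "\<bar>(\<lambda>_. measure \<nu> B) k\<bar> \<le> 1" for k :: nat using Nu.prob_le_1 by simp
    note S1 = key_sum[where G=G', OF P Tm Wm ind g_meas G'm A B]
    note S2 = key_int[where c="\<lambda>_. measure \<nu> B", OF P Tm g_meas A cb]
    have teq: "measure M {\<omega>\<in>space M. T \<omega> \<in> A \<and> g (T \<omega>) = k} * measure M {\<omega>\<in>space M. G' k (W \<omega>) \<in> B}
       = measure M {\<omega>\<in>space M. T \<omega> \<in> A \<and> g (T \<omega>) = k} * measure \<nu> B" for k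
    proof (cases "k \<ge> n")
      case True
      then show ?thesis unfolding \<nu>_def using dmeas[OF dk'[OF True] B] by simp
    qed (simp add: Ek0)
    have eqm: "measure M {\<omega>\<in>space M. T \<omega> \<in> A \<and> G' (g (T \<omega>)) (W \<omega>) \<in> B}
       = (\<integral>\<omega>. indicator A (T \<omega>) * measure \<nu> B \<partial>M)"
      using S1 S2 unfolding teq by (rule sums_unique2)
    have "(\<integral>\<omega>. indicator A (T \<omega>) * measure \<nu> B \<partial>M) = (\<integral>\<omega>. indicator (T -` A \<inter> space M) \<omega> \<partial>M) * measure \<nu> B"
      by (subst integral_mult_left_zero[symmetric]) (rule Bochner_Integration.integral_cong, auto simp: indicator_def)
    also have "T -` A \<inter> space M = {\<omega>\<in>space M. T \<omega> \<in> A}" by auto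
    also have "(\<integral>\<omega>. indicator {\<omega>\<in>space M. T \<omega> \<in> A} \<omega> \<partial>M) = measure M {\<omega>\<in>space M. T \<omega> \<in> A}"
      by (simp add: Int_absorb2)
    finally have "(\<integral>\<omega>. indicator A (T \<omega>) * measure \<nu> B \<partial>M) = measure \<nu> B * measure M {\<omega>\<in>space M. T \<omega> \<in> A}"
      by simp
    moreover have "{\<omega>\<in>space M. T \<omega> \<in> A \<and> Phi \<omega> \<in> B} = {\<omega>\<in>space M. T \<omega> \<in> A \<and> G' (g (T \<omega>)) (W \<omega>) \<in> B}"
      using PhiEq by auto
    ultimately show ?thesis using eqm by simp
  qed
  have marg: "measure M {\<omega>\<in>space M. Phi \<omega> \<in> B} = measure \<nu> B" if B: "B \<in> sets (borel :: real measure)" for B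
  proof -
    have "{\<omega>\<in>space M. Phi \<omega> \<in> B} = {\<omega>\<in>space M. T \<omega> \<in> space ST \<and> Phi \<omega> \<in> B}"
      using measurable_space[OF Tm] by auto
    moreover have "{\<omega>\<in>space M. T \<omega> \<in> space ST} = space M" using measurable_space[OF Tm] by auto
    ultimately show ?thesis using joint[OF sets.top B] prob_space by simp
  qed
  have part2: "indep_rv M borel Phi ST T"
    unfolding indep_rv_def
  proof (intro conjI)
    show "Phi \<in> borel_measurable M" by (rule Phim)
    show "T \<in> measurable M ST" by (rule Tm)
    show "indep_set (sigma_sets (space M) {Phi -` A \<inter> space M |A. A \<in> sets borel})
        (sigma_sets (space M) {T -` A \<inter> space M |A. A \<in> sets ST})"
    proof (rule indep_set_sigma_sets[OF _ Int_stable_vimage Int_stable_vimage], rule indep_setI)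
      show "{Phi -` A \<inter> space M |A. A \<in> sets borel} \<subseteq> events"
        using measurable_sets[OF Phim] by auto
      show "{T -` A \<inter> space M |A. A \<in> sets ST} \<subseteq> events"
        using measurable_sets[OF Tm] by auto
      fix a b assume "a \<in> {Phi -` A \<inter> space M |A. A \<in> sets borel}" "b \<in> {T -` A \<inter> space M |A. A \<in> sets ST}"
      then obtain B A where B: "B \<in> sets borel" and a: "a = Phi -` B \<inter> space M"
        and A: "A \<in> sets ST" and b: "b = T -` A \<inter> space M" by auto
      have "a \<inter> b = {\<omega>\<in>space M. T \<omega> \<in> A \<and> Phi \<omega> \<in> B}" unfolding a b by auto
      moreover have "a = {\<omega>\<in>space M. Phi \<omega> \<in> B}" unfolding a by auto
      moreover have "b = {\<omega>\<in>space M. T \<omega> \<in> A}" unfolding b by auto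
      ultimately show "prob (a \<inter> b) = prob a * prob b" using joint[OF A B] marg[OF B] by simp
    qed
  qed
  have part3: "distributed M lborel Phi std_normal_density"
    unfolding distributed_def
  proof (intro conjI)
    show "(\<lambda>x. ennreal (std_normal_density x)) \<in> borel_measurable lborel" by simp
    show "Phi \<in> measurable M lborel" using Phim by simp
    show "distr M lborel Phi = density lborel (\<lambda>x. ennreal (std_normal_density x))"
    proof (rule measure_eqI)
      show "sets (distr M lborel Phi) = sets (density lborel (\<lambda>x. ennreal (std_normal_density x)))" by simp
      fix B assume "B \<in> sets (distr M lborel Phi)"
      hence B: "B \<in> sets (borel :: real measure)" by simp
      have "emeasure (distr M lborel Phi) B = emeasure M (Phi -` B \<inter> space M)"
        using B Phim by (subst emeasure_distr) auto
      also have "Phi -` B \<inter> space M = {\<omega>\<in>space M. Phi \<omega> \<in> B}" by auto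
      also have "emeasure M {\<omega>\<in>space M. Phi \<omega> \<in> B} = ennreal (measure M {\<omega>\<in>space M. Phi \<omega> \<in> B})"
        by (simp add: emeasure_eq_measure)
      also have "\<dots> = ennreal (measure \<nu> B)" using marg[OF B] by simp
      also have "\<dots> = emeasure \<nu> B" by (simp add: Nu.emeasure_eq_measure)
      finally show "emeasure (distr M lborel Phi) B = emeasure (density lborel (\<lambda>x. ennreal (std_normal_density x))) B"
        unfolding \<nu>_def normal_measure_def .
    qed
  qed
  show ?thesis
    unfolding q_def[symmetric] using part1 part2 part3 unfolding Phi_def by blast
qed


end
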